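(* Let $(X,f)$ be a dynamical system. The following are equivalent: (1) $(X,f)$ is strongly multi-transitive; (2) $(X,f)$ is weakly mixing and multi-transitive; (3) $(X,f)$ is $\mathcal{F}[\infty]$-mixing; (4) $(X,f)$ is $\mathcal{F}_{smt}$-point transitive, where $\mathcal{F}_{smt}=\nabla(\mathcal{F}[\infty]\cap\mathcal{F}_t)$.
   Context: A dynamical system is a pair $(X,f)$ with $X$ a compact metric space and $f:X\to X$ continuous. $\mathbb{N}=\{1,2,\dots\}$, $\mathbb{Z}_+=\{0,1,2,\dots\}$. $N(U,V)=\{n\in\mathbb{N}: U\cap f^{-n}(V)\neq\emptyset\}$, $N(x,U)=\{n\in\mathbb{N}: f^n(x)\in U\}$. $(X,f)$ is transitive if $N(U,V)\neq\emptyset$ for all non-empty open $U,V$; weakly mixing if $(X\times X,f\times f)$ is transitive. For $\mathbf{a}=(a_1,\dots,a_r)\in\mathbb{N}^r$, $(X,f)$ is $\mathbf{a}$-transitive if $(X^r,f^{a_1}\times\dots\times f^{a_r})$ is transitive; multi-transitive if it is $(1,2,\dots,n)$-transitive for every $n\in\mathbb{N}$; strongly multi-transitive if it is $\mathbf{a}$-transitive for every $r\in\mathbb{N}$ and every $\mathbf{a}\in\mathbb{N}^r$. For a family $\mathcal{F}$ of subsets of $\mathbb{N}$: $(X,f)$ is $\mathcal{F}$-transitive if $N(U,V)\in\mathcal{F}$ for all non-empty open $U,V$; $\mathcal{F}$-mixing if $(X\times X,f\times f)$ is $\mathcal{F}$-transitive; $x$ is an $\mathcal{F}$-transitive point if $N(x,U)\in\mathcal{F}$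 for every non-empty open $U$, and $(X,f)$ is $\mathcal{F}$-point transitive if such a point exists. For $F\subset\mathbb{N}$, $F-F=\{a-b:a,b\in F,\ a>b\}$ and $\nabla(\mathcal{F})=\{F\subset\mathbb{N}: F-F\in\mathcal{F}\}$. $\mathcal{F}_t$ is the family of thick sets ($F$ such that for every $n$ there is $a$ with $\{a,\dots,a+n\}\subset F$). $\mathcal{F}[\mathbf{a}]$ is the collection of all $F\subset\mathbb{N}$ such that for every $(n_1,\dots,n_r)\in\mathbb{Z}_+^r$ there is $k\in\mathbb{N}$ with $ka_i+n_i\in F$ for all $i$; $\mathcal{F}[\infty]=\bigcap_{i=1}^\infty\mathcal{F}[(1,2,\dots,i)]$. *)

theory Defs
  imports "HOL-Analysis.Analysis"
begin

text \<open>A general topological system (T, g), where g maps topspace T into itself.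
  Return-time sets; natural numbers are N = {1,2,...}.\<close>

definition hit_times :: "'a topology \<Rightarrow> ('a \<Rightarrow> 'a) \<Rightarrow> 'a set \<Rightarrow> 'a set \<Rightarrow> nat set" where
  "hit_times T g U V = {n. n \<ge> 1 \<and> U \<inter> ((g ^^ n) -` V) \<inter> topspace T \<noteq> {}}"

definition visit_times :: "('a \<Rightarrow> 'a) \<Rightarrow> 'a \<Rightarrow> 'a set \<Rightarrow> nat set" where
  "visit_times g x U = {n. n \<ge> 1 \<and> (g ^^ n) x \<in> U}"

definition top_transitive :: "'a topology \<Rightarrow> ('a \<Rightarrow> 'a) \<Rightarrow> bool" where
  "top_transitive T g \<longleftrightarrow>
     (\<forall>U V. openin T U \<and> U \<noteq> {} \<and> openin T V \<and> V \<noteq> {} \<longrightarrow> hit_times T g U V \<noteq> {})"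

definition F_transitive :: "nat set set \<Rightarrow> 'a topology \<Rightarrow> ('a \<Rightarrow> 'a) \<Rightarrow> bool" where
  "F_transitive \<F> T g \<longleftrightarrow>
     (\<forall>U V. openin T U \<and> U \<noteq> {} \<and> openin T V \<and> V \<noteq> {} \<longrightarrow> hit_times T g U V \<in> \<F>)"

definition F_point_transitive :: "nat set set \<Rightarrow> 'a topology \<Rightarrow> ('a \<Rightarrow> 'a) \<Rightarrow> bool" where
  "F_point_transitive \<F> T g \<longleftrightarrow>
     (\<exists>x\<in>topspace T. \<forall>U. openin T U \<and> U \<noteq> {} \<longrightarrow> visit_times g x U \<in> \<F>)"

definition prod_map :: "('a \<Rightarrow> 'a) \<Rightarrow> 'a \<times> 'a \<Rightarrow> 'a \<times> 'a" where
  "prod_map g z = (g (fst z), g (snd z))"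

definition weakly_mixing :: "'a topology \<Rightarrow> ('a \<Rightarrow> 'a) \<Rightarrow> bool" where
  "weakly_mixing T g \<longleftrightarrow> top_transitive (prod_topology T T) (prod_map g)"

definition F_mixing :: "nat set set \<Rightarrow> 'a topology \<Rightarrow> ('a \<Rightarrow> 'a) \<Rightarrow> bool" where
  "F_mixing \<F> T g \<longleftrightarrow> F_transitive \<F> (prod_topology T T) (prod_map g)"

text \<open>The vector a = (a_1,...,a_r) is a list of positive naturals of length r;
  X^r is the product topology indexed by {..<r}, and the map is f^{a_1} x ... x f^{a_r}.\<close>

definition power_prod_map :: "nat list \<Rightarrow> ('a \<Rightarrow> 'a) \<Rightarrow> (nat \<Rightarrow> 'a) \<Rightarrow> (nat \<Rightarrow> 'a)" where
  "power_prod_map as g x = (\<lambda>i\<in>{..<length as}. (g ^^ (as ! i)) (x i))"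

definition vec_transitive :: "nat list \<Rightarrow> 'a topology \<Rightarrow> ('a \<Rightarrow> 'a) \<Rightarrow> bool" where
  "vec_transitive as T g \<longleftrightarrow>
     top_transitive (product_topology (\<lambda>i. T) {..<length as}) (power_prod_map as g)"

definition multi_transitive :: "'a topology \<Rightarrow> ('a \<Rightarrow> 'a) \<Rightarrow> bool" where
  "multi_transitive T g \<longleftrightarrow> (\<forall>n\<ge>1. vec_transitive [1..<n+1] T g)"

definition strongly_multi_transitive :: "'a topology \<Rightarrow> ('a \<Rightarrow> 'a) \<Rightarrow> bool" where
  "strongly_multi_transitive T g \<longleftrightarrow>
     (\<forall>as. as \<noteq> [] \<and> (\<forall>a\<in>set as. a \<ge> 1) \<longrightarrow> vec_transitive as T g)"

definition thick_sets :: "nat set set" where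
  "thick_sets = {F. F \<subseteq> {1..} \<and> (\<forall>n. \<exists>a. {a..a+n} \<subseteq> F)}"

definition F_vec :: "nat list \<Rightarrow> nat set set" where
  "F_vec as = {F. F \<subseteq> {1..} \<and>
     (\<forall>ns. length ns = length as \<longrightarrow> (\<exists>k\<ge>1. \<forall>i<length as. k * as ! i + ns ! i \<in> F))}"

definition F_infty :: "nat set set" where
  "F_infty = (\<Inter>i\<in>{1..}. F_vec [1..<i+1])"

definition diff_set :: "nat set \<Rightarrow> nat set" where
  "diff_set F = {a - b | a b. a \<in> F \<and> b \<in> F \<and> a > b}"

definition nabla :: "nat set set \<Rightarrow> nat set set" where
  "nabla \<F> = {F. F \<subseteq> {1..} \<and> diff_set F \<in> \<F>}"

definition F_smt :: "nat set set" where
  "F_smt = nabla (F_infty \<inter> thick_sets)"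

end

theory Submission
  imports Defs
begin

lemma PiE_open: "(\<forall>i<(r::nat). openin (top_of_set X) (U i)) \<Longrightarrow> openin (product_topology (\<lambda>i. top_of_set X) {..<r}) (PiE {..<r} U)"
  apply (subst openin_PiE_gen)
  apply (rule disjI2)
  apply (rule conjI)
   apply (rule finite_subset[of _ "{..<r}"])
  by auto
lemma PiE_ne: "(\<forall>i<(r::nat). U i \<noteq> {}) \<Longrightarrow> PiE {..<r} U \<noteq> {}"
  by (simp add: PiE_eq_empty_iff)

lemma Finf_iff: "A \<in> F_infty \<longleftrightarrow> A \<subseteq> {1..} \<and> (\<forall>i\<ge>1. \<forall>ns. length ns = i \<longrightarrow> (\<exists>k\<ge>1. \<forall>j<i. k*(j+1) + ns!j \<in> A))"
proof
  assume A: "A \<in> F_infty"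
  then have "A \<in> F_vec [1..<1+1]" unfolding F_infty_def by blast
  then have "A \<subseteq> {1..}" unfolding F_vec_def by blast
  moreover have "\<forall>i\<ge>1. \<forall>ns. length ns = i \<longrightarrow> (\<exists>k\<ge>1. \<forall>j<i. k*(j+1) + ns!j \<in> A)"
  proof (intro allI impI)
    fix i :: nat and ns :: "nat list" assume i: "i \<ge> 1" "length ns = i"
    then have "A \<in> F_vec [1..<i+1]" using A unfolding F_infty_def by blast
    then obtain k where k: "k \<ge> 1" "\<forall>j<length [1..<i+1]. k * [1..<i+1] ! j + ns ! j \<in> A"
      using i unfolding F_vec_def by auto
    have L: "length [1..<i+1] = i" by simp
    have L2: "[1..<i+1]!j = j+1" if "j < i" for j using that by (subst nth_upt) auto
    have "\<forall>j<i. k*(j+1) + ns!j \<in> A"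
    proof (intro allI impI)
      fix j assume j: "j < i"
      have "k * [1..<i+1] ! j + ns ! j \<in> A" using k(2)[unfolded L] j by blast
      then show "k*(j+1) + ns!j \<in> A" by (subst (asm) L2[OF j])
    qed
    then show "\<exists>k\<ge>1. \<forall>j<i. k*(j+1) + ns!j \<in> A" using k(1) by blast
  qed
  ultimately show "A \<subseteq> {1..} \<and> (\<forall>i\<ge>1. \<forall>ns. length ns = i \<longrightarrow> (\<exists>k\<ge>1. \<forall>j<i. k*(j+1) + ns!j \<in> A))" by blast
next
  assume A: "A \<subseteq> {1..} \<and> (\<forall>i\<ge>1. \<forall>ns. length ns = i \<longrightarrow> (\<exists>k\<ge>1. \<forall>j<i. k*(j+1) + ns!j \<in> A))"
  show "A \<in> F_infty" unfolding F_infty_def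
  proof
    fix i :: nat assume "i \<in> {1..}"
    then have i: "i \<ge> 1" by simp
    show "A \<in> F_vec [1..<i+1]" unfolding F_vec_def
    proof (intro CollectI conjI allI impI)
      show "A \<subseteq> {1..}" using A by blast
      fix ns :: "nat list" assume "length ns = length [1..<i+1]"
      then have "length ns = i" by simp
      then obtain k where k: "k \<ge> 1" "\<forall>j<i. k*(j+1) + ns!j \<in> A" using A i by blast
      have L: "length [1..<i+1] = i" by simp
      have L2: "[1..<i+1]!j = j+1" if "j < i" for j using that by (subst nth_upt) auto
      have "\<forall>j<length [1..<i+1]. k * [1..<i+1] ! j + ns ! j \<in> A"
      proof (intro allI impI)
        fix j assume "j < length [1..<i+1]"
        then have j: "j < i" unfolding L .
        show "k * [1..<i+1] ! j + ns ! j \<in> A" by (subst L2[OF j]) (use k(2) j in blast)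
      qed
      then show "\<exists>k\<ge>1. \<forall>j<length [1..<i+1]. k * [1..<i+1] ! j + ns ! j \<in> A"
        using k(1) by blast
    qed
  qed
qed

lemma Finf_up: "A \<in> F_infty \<Longrightarrow> A \<subseteq> B \<Longrightarrow> B \<subseteq> {1..} \<Longrightarrow> B \<in> F_infty"
proof -
  assume a: "A \<in> F_infty" "A \<subseteq> B" "B \<subseteq> {1..}"
  show "B \<in> F_infty" unfolding Finf_iff
  proof (intro conjI allI impI)
    show "B \<subseteq> {1..}" by fact
    fix i :: nat and ns :: "nat list" assume "i \<ge> 1" "length ns = i"
    then obtain k where "k \<ge> 1" "\<forall>j<i. k*(j+1) + ns!j \<in> A" using a(1) unfolding Finf_iff by blast
    then show "\<exists>k\<ge>1. \<forall>j<i. k*(j+1) + ns!j \<in> B" using a(2) by blast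
  qed
qed

lemma Finf_ne: "A \<in> F_infty \<Longrightarrow> A \<noteq> {}"
proof
  assume "A \<in> F_infty" "A = {}"
  then obtain k where "\<forall>j<1. k*(j+1) + [0::nat]!j \<in> A" unfolding Finf_iff
    by (metis le_refl length_Cons list.size(3) One_nat_def)
  then show False using \<open>A = {}\<close> by auto
qed

lemma Finf_shift:
  assumes "A \<in> F_infty"
  shows "(\<lambda>n. n + c) ` A \<in> F_infty"
  unfolding Finf_iff
proof (intro conjI allI impI)
  have "A \<subseteq> {1..}" using assms unfolding Finf_iff by blast
  then show "(\<lambda>n. n + c) ` A \<subseteq> {1..}" by auto
  fix i :: nat and ns :: "nat list" assume i: "i \<ge> 1" "length ns = i"
  define ns' where "ns' = map (\<lambda>j. ns!j + c*j) [0..<i]"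
  have "length ns' = i" by (simp add: ns'_def)
  then obtain k where k: "k \<ge> 1" "\<forall>j<i. k*(j+1) + ns'!j \<in> A" using assms i unfolding Finf_iff by blast
  have "\<forall>j<i. (k+c)*(j+1) + ns!j \<in> (\<lambda>n. n + c) ` A"
  proof (intro allI impI)
    fix j assume j: "j < i"
    have e0: "ns'!j = ns!j + c*j" using j by (simp add: ns'_def)
    have e: "(k+c)*(j+1) + ns!j = (k*(j+1) + ns'!j) + c"
      unfolding e0 by (simp add: algebra_simps)
    have "k*(j+1) + ns'!j \<in> A" using k(2) j by blast
    then show "(k+c)*(j+1) + ns!j \<in> (\<lambda>n. n + c) ` A" unfolding e by blast
  qed
  moreover have "k + c \<ge> 1" using k(1) by simp
  ultimately show "\<exists>k\<ge>1. \<forall>j<i. k*(j+1) + ns!j \<in> (\<lambda>n. n + c) ` A" by blast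
qed

lemma thick_up: "A \<in> thick_sets \<Longrightarrow> A \<subseteq> B \<Longrightarrow> B \<subseteq> {1..} \<Longrightarrow> B \<in> thick_sets"
  unfolding thick_sets_def by blast

lemma diff_mono: "A \<subseteq> B \<Longrightarrow> diff_set A \<subseteq> diff_set B"
  unfolding diff_set_def by blast

lemma diff_pos: "diff_set A \<subseteq> {1..}"
  unfolding diff_set_def by auto



lemma hit_times_mono: "U \<subseteq> U' \<Longrightarrow> V \<subseteq> V' \<Longrightarrow> hit_times T g U V \<subseteq> hit_times T g U' V'"
  unfolding hit_times_def by blast

lemma hit_times_pos: "hit_times T g U V \<subseteq> {1..}"
  unfolding hit_times_def by auto

lemma hit_times_iff: "n \<in> hit_times T g U V \<longleftrightarrow> n \<ge> 1 \<and> (\<exists>z. z \<in> U \<and> (g^^n) z \<in> V \<and> z \<in> topspace T)"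
  unfolding hit_times_def by blast

lemma baire_X:
  fixes X :: "'a::metric_space set"
  assumes cpt: "compact X" and ne: "X \<noteq> {}" and cG: "countable \<G>"
    and G: "\<forall>T\<in>\<G>. openin (top_of_set X) T \<and> (\<forall>U. openin (top_of_set X) U \<and> U \<noteq> {} \<longrightarrow> T \<inter> U \<noteq> {})"
  shows "\<exists>x\<in>X. \<forall>T\<in>\<G>. x \<in> T"
proof (rule ccontr)
  assume nx: "\<not> (\<exists>x\<in>X. \<forall>T\<in>\<G>. x \<in> T)"
  have lc: "locally_compact_space (top_of_set X)"
    using cpt by (intro compact_imp_locally_compact_space compact_space_subtopology) (simp add: compactin_euclidean_iff)
  have rg: "regular_space (top_of_set X)"
    by (intro regular_space_subtopology regular_space_euclidean)
  have "(top_of_set X) closure_of \<Inter>\<G> = topspace (top_of_set X)"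
  proof (rule Baire_category)
    show "completely_metrizable_space (top_of_set X) \<or> locally_compact_space (top_of_set X) \<and> regular_space (top_of_set X)"
      using lc rg by blast
    show "countable \<G>" by fact
    fix T assume "T \<in> \<G>"
    then show "openin (top_of_set X) T \<and> (top_of_set X) closure_of T = topspace (top_of_set X)"
      using G unfolding dense_intersects_open by blast
  qed
  moreover have "topspace (top_of_set X) \<inter> \<Inter>\<G> = {}" using nx by auto
  then have "(top_of_set X) closure_of \<Inter>\<G> = {}"
    by (metis closure_of_empty closure_of_restrict)
  ultimately show False using ne by simp
qed

lemma countable_base:
  fixes X :: "'a::metric_space set"
  assumes cpt: "compact X"
  obtains \<B> where "countable \<B>" "\<forall>B\<in>\<B>. openin (top_of_set X) B \<and> B \<noteq> {}"
    "\<forall>U. openin (top_of_set X) U \<and> U \<noteq> {} \<longrightarrow> (\<exists>B\<in>\<B>. B \<subseteq> U)"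
proof -
  have "\<forall>m::nat. \<exists>K. finite K \<and> K \<subseteq> X \<and> X \<subseteq> (\<Union>d\<in>K. ball d (inverse (real (Suc m))))"
  proof
    fix m :: nat
    have "X \<subseteq> (\<Union>d\<in>X. ball d (inverse (real (Suc m))))" by auto
    then obtain C where "C \<subseteq> X" "finite C" "X \<subseteq> (\<Union>d\<in>C. ball d (inverse (real (Suc m))))"
      using compactE_image[OF cpt, of X "\<lambda>d. ball d (inverse (real (Suc m)))"] by blast
    then show "\<exists>K. finite K \<and> K \<subseteq> X \<and> X \<subseteq> (\<Union>d\<in>K. ball d (inverse (real (Suc m))))" by blast
  qed
  then have "\<exists>K. \<forall>m::nat. finite (K m) \<and> K m \<subseteq> X \<and> X \<subseteq> (\<Union>d\<in>K m. ball d (inverse (real (Suc m))))"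
    by (rule choice)
  then obtain K where K: "\<forall>m::nat. finite (K m) \<and> K m \<subseteq> X \<and> X \<subseteq> (\<Union>d\<in>K m. ball d (inverse (real (Suc m))))"
    by blast
  define \<B> where "\<B> = {B. \<exists>m. \<exists>d\<in>K m. B = X \<inter> ball d (inverse (real (Suc m))) \<and> B \<noteq> {}}"
  have "\<B> \<subseteq> (\<lambda>(m,d). X \<inter> ball d (inverse (real (Suc m)))) ` (SIGMA m:UNIV. K m)"
    unfolding \<B>_def by auto
  moreover have "countable (SIGMA m:UNIV. K m)"
    using K by (intro countable_SIGMA) (auto intro: countable_finite)
  ultimately have c: "countable \<B>" by (meson countable_image countable_subset)
  have o: "\<forall>B\<in>\<B>. openin (top_of_set X) B \<and> B \<noteq> {}"
    unfolding \<B>_def by auto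
  have cov: "\<forall>U. openin (top_of_set X) U \<and> U \<noteq> {} \<longrightarrow> (\<exists>B\<in>\<B>. B \<subseteq> U)"
  proof (intro allI impI)
    fix U assume U: "openin (top_of_set X) U \<and> U \<noteq> {}"
    then obtain y where y: "y \<in> U" by blast
    obtain T where T: "open T" "U = X \<inter> T" using U openin_open by blast
    obtain r where r: "r > 0" "ball y r \<subseteq> T" using T y open_contains_ball by blast
    obtain m where m: "inverse (real (Suc m)) < r / 2" using reals_Archimedean[of "r/2"] r(1) by auto
    have yX: "y \<in> X" using y T by blast
    then obtain d where d: "d \<in> K m" "y \<in> ball d (inverse (real (Suc m)))" using K by blast
    define B where "B = X \<inter> ball d (inverse (real (Suc m)))"
    have "B \<in> \<B>" unfolding \<B>_def B_def using d yX by blast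
    moreover have "B \<subseteq> U"
    proof
      fix z assume z: "z \<in> B"
      have "dist y z \<le> dist y d + dist d z" by (rule dist_triangle)
      also have "\<dots> < r" using d(2) z m unfolding B_def by (simp add: dist_commute)
      finally have "z \<in> ball y r" by simp
      then show "z \<in> U" using z r T unfolding B_def by blast
    qed
    ultimately show "\<exists>B\<in>\<B>. B \<subseteq> U" by blast
  qed
  show ?thesis using that c o cov by blast
qed

lemma openin_fin_Inter:
  assumes "finite I" "\<forall>i\<in>I. openin (top_of_set X) (S i)"
  shows "openin (top_of_set X) (X \<inter> \<Inter>(S ` I))"
  using assms
proof (induction I rule: finite_induct)
  case empty then show ?case by simp
next
  case (insert i F)
  have "X \<inter> \<Inter>(S ` insert i F) = S i \<inter> (X \<inter> \<Inter>(S ` F))"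
    using insert.prems openin_imp_subset by fastforce
  then show ?case using insert by (simp add: openin_Int)
qed


locale dsys =
  fixes X :: "'a::metric_space set" and f :: "'a \<Rightarrow> 'a"
  assumes cpt: "compact X" and ne: "X \<noteq> {}" and cont: "continuous_on X f" and inv: "f ` X \<subseteq> X"
begin

abbreviation "N \<equiv> hit_times (top_of_set X) f"
abbreviation "opn U \<equiv> openin (top_of_set X) U \<and> U \<noteq> {}"

lemma hit_iff: "n \<in> N U V \<longleftrightarrow> n \<ge> 1 \<and> (\<exists>x\<in>U\<inter>X. (f^^n) x \<in> V)"
  by (auto simp: hit_times_def)

lemma hit_ge1: "n \<in> N U V \<Longrightarrow> n \<ge> 1"
  by (simp add: hit_iff)

lemma hit_mono: "U \<subseteq> U' \<Longrightarrow> V \<subseteq> V' \<Longrightarrow> N U V \<subseteq> N U' V'"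
  unfolding hit_iff subset_iff by blast

lemma fpow_in: "x \<in> X \<Longrightarrow> (f^^n) x \<in> X"
  by (induction n) (use inv in auto)

lemma fpow_cont: "continuous_on X (f^^n)"
proof (induction n)
  case 0 then show ?case by (simp add: continuous_on_id')
next
  case (Suc n)
  have "continuous_on ((f^^n) ` X) f"
    using cont by (rule continuous_on_subset) (auto intro: fpow_in)
  then have "continuous_on X (f \<circ> (f^^n))"
    using Suc by (intro continuous_on_compose) auto
  then show ?case by simp
qed

lemma pre_open: "openin (top_of_set X) V \<Longrightarrow> openin (top_of_set X) (X \<inter> (f^^n) -` V)"
  by (rule continuous_openin_preimage[OF fpow_cont]) (auto intro: fpow_in)

lemma opn_sub: "openin (top_of_set X) U \<Longrightarrow> U \<subseteq> X"
  by (meson openin_imp_subset)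

lemma surj:
  assumes tr: "\<And>U V. opn U \<Longrightarrow> opn V \<Longrightarrow> N U V \<noteq> {}"
  shows "f ` X = X"
proof (rule ccontr)
  assume "f ` X \<noteq> X"
  then obtain y where y: "y \<in> X" "y \<notin> f ` X" using inv by auto
  have "compact (f ` X)" using cpt cont by (simp add: compact_continuous_image)
  then have "closed (f ` X)" by (rule compact_imp_closed)
  then have "open (- f ` X)" by auto
  define V where "V = X \<inter> (- f ` X)"
  have "opn V" using y \<open>open (- f ` X)\<close> unfolding V_def
    by (auto simp: openin_open)
  moreover have "opn X" using ne by auto
  ultimately obtain n where n: "n \<in> N X V" using tr by blast
  then obtain x where x: "x \<in> X" "(f^^n) x \<in> V" and "n \<ge> 1" by (auto simp: hit_iff)
  then obtain m where "n = Suc m" by (cases n) auto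
  then have "(f^^n) x = f ((f^^m) x)" by simp
  then have "(f^^n) x \<in> f ` X" using fpow_in[OF x(1)] by auto
  then show False using x(2) by (auto simp: V_def)
qed

lemma surj_pow: "f ` X = X \<Longrightarrow> (f^^n) ` X = X"
proof (induction n)
  case (Suc n)
  have "(f^^Suc n) ` X = f ` ((f^^n) ` X)" by (simp add: image_comp)
  then show ?case using Suc by simp
qed simp

lemma pre_opn:
  assumes "f ` X = X" "opn V"
  shows "opn (X \<inter> (f^^n) -` V)"
proof -
  obtain v where v: "v \<in> V" using assms by auto
  then have "v \<in> (f^^n) ` X" using surj_pow[OF assms(1)] opn_sub assms(2) by blast
  then obtain x where "x \<in> X" "(f^^n) x = v" by auto
  then have "x \<in> X \<inter> (f^^n) -` V" using v by auto
  then show ?thesis using pre_open assms(2) by blast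
qed

lemma fcomm: "(f^^a) ((f^^b) x) = (f^^(a+b)) x"
  by (simp add: funpow_add)

definition "WMbox \<longleftrightarrow> (\<forall>U1 V1 U2 V2. opn U1 \<longrightarrow> opn V1 \<longrightarrow> opn U2 \<longrightarrow> opn V2 \<longrightarrow> N U1 V1 \<inter> N U2 V2 \<noteq> {})"

lemma WM_trans: "WMbox \<Longrightarrow> opn U \<Longrightarrow> opn V \<Longrightarrow> N U V \<noteq> {}"
  unfolding WMbox_def by blast

lemma fur:
  assumes "WMbox" "opn U1" "opn V1" "opn U2" "opn V2"
  obtains U V where "opn U" "opn V" "N U V \<subseteq> N U1 V1 \<inter> N U2 V2"
proof -
  obtain m where m: "m \<in> N U1 U2" "m \<in> N V1 V2" using assms unfolding WMbox_def by blast
  define U where "U = U1 \<inter> (X \<inter> (f^^m) -` U2)"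
  define V where "V = V1 \<inter> (X \<inter> (f^^m) -` V2)"
  have "U \<noteq> {}" using m(1) by (auto simp: hit_iff U_def)
  moreover have "V \<noteq> {}" using m(2) by (auto simp: hit_iff V_def)
  moreover have "openin (top_of_set X) U" unfolding U_def using assms pre_open by blast
  moreover have "openin (top_of_set X) V" unfolding V_def using assms pre_open by blast
  moreover have "N U V \<subseteq> N U1 V1 \<inter> N U2 V2"
  proof
    fix n assume "n \<in> N U V"
    then obtain x where x: "n \<ge> 1" "x \<in> U" "x \<in> X" "(f^^n) x \<in> V" by (auto simp: hit_iff)
    have n1: "n \<in> N U1 V1" using x by (auto simp: hit_iff U_def V_def)
    have "(f^^n) ((f^^m) x) = (f^^m) ((f^^n) x)" by (simp add: fcomm add.commute)
    moreover have "(f^^m) x \<in> U2 \<inter> X" using x fpow_in[OF x(3)] by (auto simp: U_def)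
    moreover have "(f^^m) ((f^^n) x) \<in> V2" using x by (auto simp: V_def)
    ultimately have "n \<in> N U2 V2" using x(1) unfolding hit_iff by metis
    with n1 show "n \<in> N U1 V1 \<inter> N U2 V2" by blast
  qed
  ultimately show ?thesis using that by blast
qed

lemma fur_fin:
  assumes "WMbox" "finite I" "I \<noteq> {}" "\<forall>i\<in>I. opn (Us i) \<and> opn (Vs i)"
  shows "\<exists>U V. opn U \<and> opn V \<and> N U V \<subseteq> (\<Inter>i\<in>I. N (Us i) (Vs i))"
  using assms(2,3,4)
proof (induction I rule: finite_ne_induct)
  case (singleton x)
  then show ?case by blast
next
  case (insert x F)
  then obtain U' V' where "opn U'" "opn V'" "N U' V' \<subseteq> (\<Inter>i\<in>F. N (Us i) (Vs i))" by auto
  moreover obtain U V where "opn U" "opn V" "N U V \<subseteq> N (Us x) (Vs x) \<inter> N U' V'"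
    using fur[OF assms(1), of "Us x" "Vs x" U' V'] insert.prems calculation by auto
  ultimately show ?case by blast
qed

definition "BT as \<longleftrightarrow> (\<forall>U V. (\<forall>i<length as. opn (U i) \<and> opn (V i)) \<longrightarrow>
   (\<exists>n\<ge>1. \<forall>i<length as. \<exists>x\<in>U i \<inter> X. (f^^(n * as!i)) x \<in> V i))"

lemma ppow:
  assumes "z \<in> PiE {..<length as} (\<lambda>_. X)"
  shows "(power_prod_map as f ^^ n) z = (\<lambda>i\<in>{..<length as}. (f^^(n * as!i)) (z i))"
proof (induction n)
  case 0
  then show ?case using assms by simp
next
  case (Suc n)
  have "(power_prod_map as f ^^ Suc n) z = power_prod_map as f ((power_prod_map as f ^^ n) z)" by simp
  also have "\<dots> = (\<lambda>i\<in>{..<length as}. (f^^(as!i)) ((f^^(n * as!i)) (z i)))"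
    unfolding Suc power_prod_map_def by (intro restrict_ext) simp
  also have "\<dots> = (\<lambda>i\<in>{..<length as}. (f^^(Suc n * as!i)) (z i))"
    by (intro restrict_ext) (simp add: fcomm)
  finally show ?case .
qed

lemma vec_lemma: "vec_transitive as (top_of_set X) f \<longleftrightarrow> BT as"
proof
  let ?I = "{..<length as}"
  let ?P = "power_prod_map as f"
  let ?PT = "product_topology (\<lambda>i. top_of_set X) ?I"
  assume H: "vec_transitive as (top_of_set X) f"
  show "BT as" unfolding BT_def
  proof (intro allI impI)
    fix U V assume UV: "\<forall>i<length as. opn (U i) \<and> opn (V i)"
    have oW: "openin ?PT (PiE ?I U)" "PiE ?I U \<noteq> {}"
      using UV by (auto intro!: PiE_open PiE_ne)
    have oW': "openin ?PT (PiE ?I V)" "PiE ?I V \<noteq> {}"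
      using UV by (auto intro!: PiE_open PiE_ne)
    have "hit_times ?PT ?P (PiE ?I U) (PiE ?I V) \<noteq> {}"
      using H[unfolded vec_transitive_def top_transitive_def, rule_format, of "PiE ?I U" "PiE ?I V"] oW oW'
      by blast
    then obtain n where "n \<in> hit_times ?PT ?P (PiE ?I U) (PiE ?I V)" by blast
    then have n: "n \<ge> 1" "PiE ?I U \<inter> (?P^^n) -` PiE ?I V \<inter> PiE ?I (\<lambda>_. X) \<noteq> {}"
      unfolding hit_times_def topspace_product_topology topspace_euclidean_subtopology by auto
    then obtain z where z: "z \<in> PiE ?I U" "(?P^^n) z \<in> PiE ?I V" "z \<in> PiE ?I (\<lambda>_. X)"
      by blast
    have "\<forall>i<length as. \<exists>x\<in>U i \<inter> X. (f^^(n * as!i)) x \<in> V i"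
    proof (intro allI impI)
      fix i assume i: "i < length as"
      have "z i \<in> U i" "z i \<in> X" using z i by auto
      moreover have "(f^^(n * as!i)) (z i) \<in> V i"
        using z(2) i unfolding ppow[OF z(3)] by (auto simp: PiE_iff)
      ultimately show "\<exists>x\<in>U i \<inter> X. (f^^(n * as!i)) x \<in> V i" by blast
    qed
    then show "\<exists>n\<ge>1. \<forall>i<length as. \<exists>x\<in>U i \<inter> X. (f^^(n * as!i)) x \<in> V i" using n(1) by blast
  qed
next
  let ?I = "{..<length as}"
  let ?P = "power_prod_map as f"
  let ?PT = "product_topology (\<lambda>i. top_of_set X) ?I"
  assume H: "BT as"
  show "vec_transitive as (top_of_set X) f"
    unfolding vec_transitive_def top_transitive_def
  proof (intro allI impI)
    fix W W' assume WW: "openin ?PT W \<and> W \<noteq> {} \<and> openin ?PT W' \<and> W' \<noteq> {}"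
    then obtain z w where zw: "z \<in> W" "w \<in> W'" by blast
    obtain U where U: "\<forall>i\<in>?I. openin (top_of_set X) (U i)" "z \<in> PiE ?I U" "PiE ?I U \<subseteq> W"
      using WW[unfolded openin_product_topology_alt] zw(1) by blast
    obtain V where V: "\<forall>i\<in>?I. openin (top_of_set X) (V i)" "w \<in> PiE ?I V" "PiE ?I V \<subseteq> W'"
      using WW[unfolded openin_product_topology_alt] zw(2) by blast
    have "\<forall>i<length as. opn (U i) \<and> opn (V i)"
    proof (intro allI impI conjI)
      fix i assume i: "i < length as"
      show "openin (top_of_set X) (U i)" "openin (top_of_set X) (V i)" using U(1) V(1) i by auto
      show "U i \<noteq> {}" using U(2) i unfolding PiE_iff by blast
      show "V i \<noteq> {}" using V(2) i unfolding PiE_iff by blast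
    qed
    then obtain n where n: "n \<ge> 1" "\<forall>i<length as. \<exists>x\<in>U i \<inter> X. (f^^(n * as!i)) x \<in> V i"
      using H unfolding BT_def by blast
    then obtain g where g: "\<forall>i<length as. g i \<in> U i \<inter> X \<and> (f^^(n * as!i)) (g i) \<in> V i"
      by metis
    define z' where "z' = restrict g ?I"
    have z'1: "z' \<in> PiE ?I (\<lambda>_. X)" using g unfolding z'_def by simp
    have "z' \<in> PiE ?I U" using g unfolding z'_def by simp
    then have "z' \<in> W" using U(3) by blast
    moreover have "(?P^^n) z' = (\<lambda>i\<in>?I. (f^^(n*as!i)) (z' i))" by (rule ppow[OF z'1])
    then have "(?P^^n) z' \<in> PiE ?I V"
      using g unfolding z'_def by simp
    then have "(?P^^n) z' \<in> W'" using V(3) by blast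
    moreover have "z' \<in> topspace ?PT" using z'1 by simp
    ultimately have "n \<in> hit_times ?PT ?P W W'" using n(1) unfolding hit_times_def by blast
    then show "hit_times ?PT ?P W W' \<noteq> {}" by blast
  qed
qed

lemma pm_pow: "(prod_map f ^^ n) z = ((f^^n) (fst z), (f^^n) (snd z))"
  by (induction n) (auto simp: prod_map_def)

abbreviation "PT \<equiv> prod_topology (top_of_set X) (top_of_set X)"
abbreviation "M \<equiv> hit_times PT (prod_map f)"

lemma box: "M (U1 \<times> U2) (V1 \<times> V2) = N U1 V1 \<inter> N U2 V2"
proof (rule set_eqI)
  fix n
  have "n \<in> M (U1 \<times> U2) (V1 \<times> V2) \<longleftrightarrow> n \<ge> 1 \<and> (\<exists>z. z \<in> U1 \<times> U2 \<and> (prod_map f ^^ n) z \<in> V1 \<times> V2 \<and> z \<in> X \<times> X)"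
    unfolding hit_times_iff by simp
  also have "\<dots> \<longleftrightarrow> n \<ge> 1 \<and> (\<exists>x y. x \<in> U1 \<and> y \<in> U2 \<and> (f^^n) x \<in> V1 \<and> (f^^n) y \<in> V2 \<and> x \<in> X \<and> y \<in> X)"
    unfolding pm_pow by auto
  also have "\<dots> \<longleftrightarrow> n \<in> N U1 V1 \<inter> N U2 V2"
    unfolding Int_iff hit_iff by blast
  finally show "n \<in> M (U1 \<times> U2) (V1 \<times> V2) \<longleftrightarrow> n \<in> N U1 V1 \<inter> N U2 V2" .
qed

lemma box_in:
  assumes "openin PT W" "W \<noteq> {}"
  obtains U1 U2 where "opn U1" "opn U2" "U1 \<times> U2 \<subseteq> W"
proof -
  obtain x y where xy: "(x, y) \<in> W" using assms(2) by auto
  have "\<exists>U1 U2. openin (top_of_set X) U1 \<and> openin (top_of_set X) U2 \<and> x \<in> U1 \<and> y \<in> U2 \<and> U1 \<times> U2 \<subseteq> W"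
    using assms(1) xy unfolding openin_prod_topology_alt by simp
  then obtain U1 U2 where "openin (top_of_set X) U1" "openin (top_of_set X) U2" "x \<in> U1" "y \<in> U2" "U1 \<times> U2 \<subseteq> W"
    by blast
  then show ?thesis using that by blast
qed

lemma box_open: "opn U1 \<Longrightarrow> opn U2 \<Longrightarrow> openin PT (U1 \<times> U2) \<and> U1 \<times> U2 \<noteq> {}"
proof -
  assume "opn U1" "opn U2"
  then show ?thesis unfolding openin_prod_Times_iff by blast
qed

lemma wm_lemma: "weakly_mixing (top_of_set X) f \<longleftrightarrow> WMbox"
proof
  assume H: "weakly_mixing (top_of_set X) f"
  show WMbox unfolding WMbox_def
  proof (intro allI impI)
    fix U1 V1 U2 V2 assume "opn U1" "opn V1" "opn U2" "opn V2"
    then have "openin PT (U1 \<times> U2) \<and> U1 \<times> U2 \<noteq> {}" "openin PT (V1 \<times> V2) \<and> V1 \<times> V2 \<noteq> {}"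
      using box_open by blast+
    then have "M (U1 \<times> U2) (V1 \<times> V2) \<noteq> {}"
      using H[unfolded weakly_mixing_def top_transitive_def, rule_format, of "U1 \<times> U2" "V1 \<times> V2"] by blast
    then show "N U1 V1 \<inter> N U2 V2 \<noteq> {}" unfolding box .
  qed
next
  assume H: WMbox
  show "weakly_mixing (top_of_set X) f" unfolding weakly_mixing_def top_transitive_def
  proof (intro allI impI)
    fix W W' assume WW: "openin PT W \<and> W \<noteq> {} \<and> openin PT W' \<and> W' \<noteq> {}"
    obtain U1 U2 where U: "opn U1" "opn U2" "U1 \<times> U2 \<subseteq> W" using box_in WW by metis
    obtain V1 V2 where V: "opn V1" "opn V2" "V1 \<times> V2 \<subseteq> W'" using box_in WW by metis
    have "N U1 V1 \<inter> N U2 V2 \<noteq> {}" using H U V unfolding WMbox_def by blast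
    then have "M (U1 \<times> U2) (V1 \<times> V2) \<noteq> {}" unfolding box .
    moreover have "M (U1 \<times> U2) (V1 \<times> V2) \<subseteq> M W W'" using U(3) V(3) by (rule hit_times_mono)
    ultimately show "M W W' \<noteq> {}" by blast
  qed
qed

definition "FB \<longleftrightarrow> (\<forall>U1 V1 U2 V2. opn U1 \<longrightarrow> opn V1 \<longrightarrow> opn U2 \<longrightarrow> opn V2 \<longrightarrow> N U1 V1 \<inter> N U2 V2 \<in> F_infty)"

lemma fmix_lemma: "F_mixing F_infty (top_of_set X) f \<longleftrightarrow> FB"
proof
  assume H: "F_mixing F_infty (top_of_set X) f"
  show FB unfolding FB_def
  proof (intro allI impI)
    fix U1 V1 U2 V2 assume "opn U1" "opn V1" "opn U2" "opn V2"
    then have "openin PT (U1 \<times> U2) \<and> U1 \<times> U2 \<noteq> {}" "openin PT (V1 \<times> V2) \<and> V1 \<times> V2 \<noteq> {}"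
      using box_open by blast+
    then have "M (U1 \<times> U2) (V1 \<times> V2) \<in> F_infty"
      using H[unfolded F_mixing_def F_transitive_def, rule_format, of "U1 \<times> U2" "V1 \<times> V2"] by blast
    then show "N U1 V1 \<inter> N U2 V2 \<in> F_infty" unfolding box .
  qed
next
  assume H: FB
  show "F_mixing F_infty (top_of_set X) f" unfolding F_mixing_def F_transitive_def
  proof (intro allI impI)
    fix W W' assume WW: "openin PT W \<and> W \<noteq> {} \<and> openin PT W' \<and> W' \<noteq> {}"
    obtain U1 U2 where U: "opn U1" "opn U2" "U1 \<times> U2 \<subseteq> W" using box_in WW by metis
    obtain V1 V2 where V: "opn V1" "opn V2" "V1 \<times> V2 \<subseteq> W'" using box_in WW by metis
    have "N U1 V1 \<inter> N U2 V2 \<in> F_infty" using H U V unfolding FB_def by blast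
    then have "M (U1 \<times> U2) (V1 \<times> V2) \<in> F_infty" unfolding box .
    moreover have "M (U1 \<times> U2) (V1 \<times> V2) \<subseteq> M W W'" using U(3) V(3) by (rule hit_times_mono)
    ultimately show "M W W' \<in> F_infty" using Finf_up hit_times_pos by blast
  qed
qed

definition "MT1 U V \<longleftrightarrow> (\<forall>m. \<exists>k\<ge>1. \<forall>j\<in>{1..m}. k*j \<in> N U V)"
definition "MTall \<longleftrightarrow> (\<forall>U V. opn U \<longrightarrow> opn V \<longrightarrow> MT1 U V)"

lemma upt_nth1: "j < m \<Longrightarrow> [1..<m+1] ! j = j + 1"
  by (subst nth_upt) auto

lemma strong_WM: "strongly_multi_transitive (top_of_set X) f \<Longrightarrow> WMbox"
proof -
  assume H: "strongly_multi_transitive (top_of_set X) f"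
  have "vec_transitive [1,1] (top_of_set X) f" using H unfolding strongly_multi_transitive_def by simp
  then have B: "BT [1,1]" by (simp add: vec_lemma)
  show WMbox unfolding WMbox_def
  proof (intro allI impI)
    fix U1 V1 U2 V2 assume a: "opn U1" "opn V1" "opn U2" "opn V2"
    define U where "U = (\<lambda>i::nat. if i = 0 then U1 else U2)"
    define V where "V = (\<lambda>i::nat. if i = 0 then V1 else V2)"
    have "\<forall>i<length [1::nat,1]. opn (U i) \<and> opn (V i)" using a by (simp add: U_def V_def)
    then obtain n where n: "n \<ge> 1" "\<forall>i<length [1::nat,1]. \<exists>x\<in>U i \<inter> X. (f^^(n * [1::nat,1]!i)) x \<in> V i"
      using B unfolding BT_def by blast
    have "\<exists>x\<in>U 0 \<inter> X. (f^^(n * [1::nat,1]!0)) x \<in> V 0" using spec[OF n(2), of 0] by simp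
    then have "n \<in> N U1 V1" using n(1) unfolding hit_iff U_def V_def by simp
    moreover have "\<exists>x\<in>U 1 \<inter> X. (f^^(n * [1::nat,1]!1)) x \<in> V 1" using spec[OF n(2), of 1] by simp
    then have "n \<in> N U2 V2" using n(1) unfolding hit_iff U_def V_def by simp
    ultimately show "N U1 V1 \<inter> N U2 V2 \<noteq> {}" by blast
  qed
qed

lemma MT_D: "MTall \<Longrightarrow> opn U \<Longrightarrow> opn V \<Longrightarrow> \<exists>k\<ge>1. \<forall>j\<in>{1..m}. k*j \<in> N U V"
  unfolding MTall_def MT1_def by blast

lemma BT_D: "BT as \<Longrightarrow> (\<forall>i<length as. opn (U i) \<and> opn (V i)) \<Longrightarrow>
   (\<exists>n\<ge>1. \<forall>i<length as. \<exists>x\<in>U i \<inter> X. (f^^(n * as!i)) x \<in> V i)"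
  unfolding BT_def by blast

lemma MT_MTall: "multi_transitive (top_of_set X) f \<Longrightarrow> MTall"
  unfolding MTall_def MT1_def
proof (intro allI impI)
  fix U V m assume H: "multi_transitive (top_of_set X) f" and UV: "opn U" "opn V"
  show "\<exists>k\<ge>1. \<forall>j\<in>{1..m}. k*j \<in> N U V"
  proof (cases "m = 0")
    case True then show ?thesis by auto
  next
    case False
    then have "vec_transitive [1..<m+1] (top_of_set X) f" using H unfolding multi_transitive_def by simp
    then have "BT [1..<m+1]" by (simp add: vec_lemma)
    then obtain n where n: "n \<ge> 1" "\<forall>i<length [1..<m+1]. \<exists>x\<in>U \<inter> X. (f^^(n * [1..<m+1]!i)) x \<in> V"
      using UV BT_D[of "[1..<m+1]" "\<lambda>_. U" "\<lambda>_. V"] by blast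
    have "\<forall>j\<in>{1..m}. n*j \<in> N U V"
    proof
      fix j assume j: "j \<in> {1..m}"
      then have "j - 1 < length [1..<m+1]" by auto
      then have "\<exists>x\<in>U \<inter> X. (f^^(n * [1..<m+1]!(j-1))) x \<in> V" using n(2) by blast
      moreover have "[1..<m+1]!(j-1) = j" using j upt_nth1[of "j-1" m] by (simp del: upt_Suc)
      moreover have "n * j \<ge> 1" using n(1) j by simp
      ultimately show "n*j \<in> N U V" unfolding hit_iff by simp
    qed
    then show ?thesis using n(1) by blast
  qed
qed

lemma WM_MT_BT:
  assumes W: WMbox and M: MTall and ne: "as \<noteq> []" and pos: "\<forall>a\<in>set as. a \<ge> 1"
  shows "BT as"
  unfolding BT_def
proof (intro allI impI)
  fix U V assume UV: "\<forall>i<length as. opn (U i) \<and> opn (V i)"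
  have A: "\<forall>i\<in>{..<length as}. opn (U i) \<and> opn (V i)" using UV by blast
  have "{..<length as} \<noteq> {}" using ne by auto
  then obtain U' V' where U': "opn U'" "opn V'" "N U' V' \<subseteq> (\<Inter>i\<in>{..<length as}. N (U i) (V i))"
    using fur_fin[OF W finite_lessThan _ A] by blast
  obtain k where k: "k \<ge> 1" "\<forall>j\<in>{1..Max (set as)}. k*j \<in> N U' V'"
    using MT_D[OF M U'(1,2)] by blast
  have "\<forall>i<length as. \<exists>x\<in>U i \<inter> X. (f^^(k * as!i)) x \<in> V i"
  proof (intro allI impI)
    fix i assume i: "i < length as"
    then have "as!i \<in> set as" by simp
    then have "as!i \<le> Max (set as)" "as!i \<ge> 1" using pos Max_ge[OF finite_set] by blast+
    then have "as!i \<in> {1..Max (set as)}" by simp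
    then have "k * as!i \<in> N U' V'" using k(2) by blast
    then have "k * as!i \<in> N (U i) (V i)" using U'(3) i by blast
    then show "\<exists>x\<in>U i \<inter> X. (f^^(k * as!i)) x \<in> V i" unfolding hit_iff by blast
  qed
  then show "\<exists>n\<ge>1. \<forall>i<length as. \<exists>x\<in>U i \<inter> X. (f^^(n * as!i)) x \<in> V i" using k(1) by blast
qed

lemma WM_MT_Finf:
  assumes W: WMbox and M: MTall and UV: "opn U" "opn V"
  shows "N U V \<in> F_infty"
  unfolding Finf_iff
proof (intro conjI allI impI)
  show "N U V \<subseteq> {1..}" by (rule hit_times_pos)
  have S: "f ` X = X" using surj WM_trans[OF W] by blast
  fix i :: nat and ns :: "nat list" assume i: "i \<ge> 1" "length ns = i"
  define Vs where "Vs = (\<lambda>j. X \<inter> (f^^(ns!j)) -` V)"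
  have A: "\<forall>j\<in>{..<i}. opn ((\<lambda>_. U) j) \<and> opn (Vs j)" using UV pre_opn[OF S] unfolding Vs_def by blast
  have "{..<i} \<noteq> {}" using i by (simp add: lessThan_empty_iff)
  then obtain U' V' where U': "opn U'" "opn V'" "N U' V' \<subseteq> (\<Inter>j\<in>{..<i}. N U (Vs j))"
    using fur_fin[OF W finite_lessThan _ A] by blast
  obtain k where k: "k \<ge> 1" "\<forall>j\<in>{1..i}. k*j \<in> N U' V'"
    using MT_D[OF M U'(1,2)] by blast
  have "\<forall>j<i. k*(j+1) + ns!j \<in> N U V"
  proof (intro allI impI)
    fix j assume j: "j < i"
    then have "j+1 \<in> {1..i}" by simp
    then have "k*(j+1) \<in> N U' V'" using k(2) by blast
    then have "k*(j+1) \<in> N U (Vs j)" using U'(3) j by blast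
    then obtain x where x: "x \<in> U" "x \<in> X" "(f^^(k*(j+1))) x \<in> Vs j" unfolding hit_iff by blast
    then have "(f^^(ns!j)) ((f^^(k*(j+1))) x) \<in> V" unfolding Vs_def by simp
    then have "(f^^(k*(j+1) + ns!j)) x \<in> V" by (simp add: fcomm add.commute)
    moreover have "k*(j+1) + ns!j \<ge> 1" using k(1) by simp
    ultimately show "k*(j+1) + ns!j \<in> N U V" using x unfolding hit_iff by blast
  qed
  then show "\<exists>k\<ge>1. \<forall>j<i. k*(j+1) + ns!j \<in> N U V" using k(1) by blast
qed

lemma WM_Finf_FB:
  assumes W: WMbox and F: "\<And>U V. opn U \<Longrightarrow> opn V \<Longrightarrow> N U V \<in> F_infty"
  shows FB
  unfolding FB_def
proof (intro allI impI)
  fix U1 V1 U2 V2 assume a: "opn U1" "opn V1" "opn U2" "opn V2"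
  obtain U V where "opn U" "opn V" "N U V \<subseteq> N U1 V1 \<inter> N U2 V2" using fur[OF W a] by blast
  moreover have "N U1 V1 \<inter> N U2 V2 \<subseteq> {1..}" using hit_times_pos by blast
  ultimately show "N U1 V1 \<inter> N U2 V2 \<in> F_infty" using F Finf_up by blast
qed

lemma FB_WM: "FB \<Longrightarrow> WMbox"
  unfolding FB_def WMbox_def using Finf_ne by blast

lemma FB_Finf: "FB \<Longrightarrow> opn U \<Longrightarrow> opn V \<Longrightarrow> N U V \<in> F_infty"
proof -
  assume "FB" "opn U" "opn V"
  then have "N U V \<inter> N U V \<in> F_infty" unfolding FB_def by blast
  then show ?thesis by simp
qed

lemma Finf_MTall:
  assumes F: "\<And>U V. opn U \<Longrightarrow> opn V \<Longrightarrow> N U V \<in> F_infty"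
  shows MTall
  unfolding MTall_def MT1_def
proof (intro allI impI)
  fix U V m assume UV: "opn U" "opn V"
  show "\<exists>k\<ge>1. \<forall>j\<in>{1..m}. k*j \<in> N U V"
  proof (cases "m = 0")
    case True then show ?thesis by auto
  next
    case False
    have "length (replicate m (0::nat)) = m" by simp
    then obtain k where k: "k \<ge> 1" "\<forall>j<m. k*(j+1) + replicate m 0 ! j \<in> N U V"
      using F[OF UV] False unfolding Finf_iff by (metis less_one not_less)
    have "\<forall>j\<in>{1..m}. k*j \<in> N U V"
    proof
      fix j assume j: "j \<in> {1..m}"
      then have "j - 1 < m" by auto
      then have "k*(j-1+1) + replicate m 0 ! (j-1) \<in> N U V" using k(2) by blast
      moreover have e: "k*(j-1+1) + replicate m 0 ! (j-1) = k*j" using j \<open>j - 1 < m\<close> by auto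
      ultimately show "k*j \<in> N U V" by (subst (asm) e)
    qed
    then show ?thesis using k(1) by blast
  qed
qed

theorem eq1: "strongly_multi_transitive (top_of_set X) f \<longleftrightarrow>
   weakly_mixing (top_of_set X) f \<and> multi_transitive (top_of_set X) f"
proof
  assume H: "strongly_multi_transitive (top_of_set X) f"
  have "weakly_mixing (top_of_set X) f" using strong_WM[OF H] wm_lemma by blast
  moreover have "multi_transitive (top_of_set X) f" unfolding multi_transitive_def
  proof (intro allI impI)
    fix n :: nat assume "n \<ge> 1"
    then show "vec_transitive [1..<n+1] (top_of_set X) f"
      using H unfolding strongly_multi_transitive_def by simp
  qed
  ultimately show "weakly_mixing (top_of_set X) f \<and> multi_transitive (top_of_set X) f" ..
next
  assume H: "weakly_mixing (top_of_set X) f \<and> multi_transitive (top_of_set X) f"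
  then have W: WMbox and M: MTall using wm_lemma MT_MTall by blast+
  show "strongly_multi_transitive (top_of_set X) f" unfolding strongly_multi_transitive_def
    using WM_MT_BT[OF W M] vec_lemma by blast
qed

theorem eq2: "weakly_mixing (top_of_set X) f \<and> multi_transitive (top_of_set X) f \<longleftrightarrow>
   F_mixing F_infty (top_of_set X) f"
proof
  assume H: "weakly_mixing (top_of_set X) f \<and> multi_transitive (top_of_set X) f"
  then have W: WMbox and M: MTall using wm_lemma MT_MTall by blast+
  have FB using WM_Finf_FB[OF W WM_MT_Finf[OF W M]] .
  then show "F_mixing F_infty (top_of_set X) f" using fmix_lemma by blast
next
  assume "F_mixing F_infty (top_of_set X) f"
  then have B: FB using fmix_lemma by blast
  then have W: WMbox using FB_WM by blast
  have M: MTall using Finf_MTall FB_Finf[OF B] by blast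
  have "weakly_mixing (top_of_set X) f" using W wm_lemma by blast
  moreover have "multi_transitive (top_of_set X) f" unfolding multi_transitive_def
  proof (intro allI impI)
    fix n :: nat assume "n \<ge> 1"
    then have "BT [1..<n+1]" by (intro WM_MT_BT[OF W M]) auto
    then show "vec_transitive [1..<n+1] (top_of_set X) f" using vec_lemma by blast
  qed
  ultimately show "weakly_mixing (top_of_set X) f \<and> multi_transitive (top_of_set X) f" ..
qed

abbreviation "vis x U \<equiv> visit_times f x U"

lemma vis_iff: "n \<in> vis x U \<longleftrightarrow> n \<ge> 1 \<and> (f^^n) x \<in> U"
  unfolding visit_times_def by simp

lemma diff_iff: "d \<in> diff_set A \<longleftrightarrow> (\<exists>a b. d = a - b \<and> a \<in> A \<and> b \<in> A \<and> a > b)"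
  unfolding diff_set_def by blast

lemma diff_vis: assumes "x \<in> X" shows "diff_set (vis x W) \<subseteq> N W W"
proof
  fix d assume "d \<in> diff_set (vis x W)"
  then obtain a b where ab: "d = a - b" "a \<in> vis x W" "b \<in> vis x W" "a > b" unfolding diff_iff by blast
  have y: "(f^^b) x \<in> W" "(f^^b) x \<in> X" using ab(3) fpow_in[OF assms] unfolding vis_iff by auto
  have "(f^^(a-b)) ((f^^b) x) = (f^^a) x" using ab(4) by (simp add: fcomm)
  then have "(f^^(a-b)) ((f^^b) x) \<in> W" using ab(2) unfolding vis_iff by simp
  moreover have "a - b \<ge> 1" using ab(4) by simp
  ultimately show "d \<in> N W W" using y ab(1) unfolding hit_iff by blast
qed

lemma vis_large:
  assumes "diff_set (vis x U) \<in> thick_sets"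
  shows "\<exists>p\<in>vis x U. p > m"
proof -
  obtain a where "{a..a+m} \<subseteq> diff_set (vis x U)" using assms unfolding thick_sets_def by blast
  then have "a + m \<in> diff_set (vis x U)" by auto
  then obtain p q where pq: "a + m = p - q" "p \<in> vis x U" "q \<in> vis x U" "p > q" unfolding diff_iff by blast
  then have "q \<ge> 1" unfolding vis_iff by simp
  then have "p > m" using pq by simp
  then show ?thesis using pq(2) by blast
qed

lemma shift_hit:
  assumes "W \<subseteq> X \<inter> (f^^a) -` U \<inter> (f^^b) -` V" "a < b" "n \<in> N W W"
  shows "n + (b - a) \<in> N U V"
proof -
  obtain y where y: "n \<ge> 1" "y \<in> W" "y \<in> X" "(f^^n) y \<in> W" using assms(3) unfolding hit_iff by blast
  have z: "(f^^a) y \<in> U" "(f^^a) y \<in> X" using y assms(1) fpow_in by auto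
  have "(f^^(n + (b-a))) ((f^^a) y) = (f^^b) ((f^^n) y)"
    using assms(2) by (simp add: fcomm algebra_simps)
  also have "\<dots> \<in> V" using y(4) assms(1) by auto
  finally show ?thesis using z y(1) unfolding hit_iff by auto
qed

definition "PTpt x \<longleftrightarrow> x \<in> X \<and> (\<forall>U. opn U \<longrightarrow> vis x U \<in> F_smt)"

lemma PT_diff: "PTpt x \<Longrightarrow> opn U \<Longrightarrow> diff_set (vis x U) \<in> F_infty \<and> diff_set (vis x U) \<in> thick_sets"
proof -
  assume "PTpt x" "opn U"
  then have "vis x U \<in> nabla (F_infty \<inter> thick_sets)" unfolding PTpt_def F_smt_def by blast
  then show ?thesis unfolding nabla_def by simp
qed

lemma PT_pair:
  assumes P: "PTpt x" and UV: "opn U" "opn V"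
  obtains a b where "a \<in> vis x U" "b \<in> vis x V" "a < b"
proof -
  obtain a where a: "a \<in> vis x U" using vis_large[of x U 0] PT_diff[OF P UV(1)] by blast
  obtain b where b: "b \<in> vis x V" "b > a" using vis_large[of x V a] PT_diff[OF P UV(2)] by blast
  show ?thesis using that a b by blast
qed

lemma PT_W:
  assumes P: "PTpt x" and "opn W" "x \<in> W"
  shows "N W W \<in> F_infty" "N W W \<in> thick_sets"
proof -
  have x: "x \<in> X" using P unfolding PTpt_def by blast
  have d: "diff_set (vis x W) \<in> F_infty" "diff_set (vis x W) \<in> thick_sets" using PT_diff[OF P assms(2)] by auto
  have s: "diff_set (vis x W) \<subseteq> N W W" by (rule diff_vis[OF x])
  have p: "N W W \<subseteq> {1..}" by (rule hit_times_pos)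
  show "N W W \<in> F_infty" by (rule Finf_up[OF d(1) s p])
  show "N W W \<in> thick_sets" by (rule thick_up[OF d(2) s p])
qed

lemma PT_Finf:
  assumes P: "PTpt x" and UV: "opn U" "opn V"
  shows "N U V \<in> F_infty"
proof -
  have x: "x \<in> X" using P unfolding PTpt_def by blast
  obtain a b where ab: "a \<in> vis x U" "b \<in> vis x V" "a < b" using PT_pair[OF P UV] by blast
  define W where "W = (X \<inter> (f^^a) -` U) \<inter> (X \<inter> (f^^b) -` V)"
  have xW: "x \<in> W" using ab x unfolding W_def vis_iff by auto
  have "openin (top_of_set X) W" unfolding W_def using UV pre_open by blast
  then have "opn W" using xW by blast
  then have NW: "N W W \<in> F_infty" using PT_W[OF P _ xW] by blast
  have "(\<lambda>n. n + (b - a)) ` N W W \<subseteq> N U V"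
    using shift_hit[of W a U b V] ab(3) unfolding W_def by blast
  then show ?thesis using Finf_up[OF Finf_shift[OF NW] _ hit_times_pos] by blast
qed

lemma PT_WM:
  assumes P: "PTpt x"
  shows WMbox
  unfolding WMbox_def
proof (intro allI impI)
  fix U1 V1 U2 V2 assume a: "opn U1" "opn V1" "opn U2" "opn V2"
  have x: "x \<in> X" using P unfolding PTpt_def by blast
  obtain a1 b1 where ab1: "a1 \<in> vis x U1" "b1 \<in> vis x V1" "a1 < b1" using PT_pair[OF P a(1,2)] by blast
  obtain a2 b2 where ab2: "a2 \<in> vis x U2" "b2 \<in> vis x V2" "a2 < b2" using PT_pair[OF P a(3,4)] by blast
  define W where "W = ((X \<inter> (f^^a1) -` U1) \<inter> (X \<inter> (f^^b1) -` V1)) \<inter> ((X \<inter> (f^^a2) -` U2) \<inter> (X \<inter> (f^^b2) -` V2))"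
  have xW: "x \<in> W" using ab1 ab2 x unfolding W_def vis_iff by auto
  have o1: "openin (top_of_set X) (X \<inter> (f^^a1) -` U1)" using a(1) pre_open by blast
  have o2: "openin (top_of_set X) (X \<inter> (f^^b1) -` V1)" using a(2) pre_open by blast
  have o3: "openin (top_of_set X) (X \<inter> (f^^a2) -` U2)" using a(3) pre_open by blast
  have o4: "openin (top_of_set X) (X \<inter> (f^^b2) -` V2)" using a(4) pre_open by blast
  have "openin (top_of_set X) W" unfolding W_def by (intro openin_Int o1 o2 o3 o4)
  then have "opn W" using xW by blast
  then have T: "N W W \<in> thick_sets" using PT_W[OF P _ xW] by blast
  have W1: "W \<subseteq> X \<inter> (f^^a1) -` U1 \<inter> (f^^b1) -` V1" unfolding W_def by blast
  have W2: "W \<subseteq> X \<inter> (f^^a2) -` U2 \<inter> (f^^b2) -` V2" unfolding W_def by blast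
  have key: "N U1 V1 \<inter> N U2 V2 \<noteq> {}" if "W \<subseteq> X \<inter> (f^^a1) -` U1 \<inter> (f^^b1) -` V1" "a1 < b1"
     "W \<subseteq> X \<inter> (f^^a2) -` U2 \<inter> (f^^b2) -` V2" "a2 < b2" "b1 - a1 \<le> b2 - a2"
     for a1 b1 a2 b2 U1 V1 U2 V2
  proof -
    define d where "d = (b2-a2) - (b1-a1)"
    obtain c where c: "{c..c + d} \<subseteq> N W W" using T unfolding thick_sets_def by blast
    have "c \<in> {c..c+d}" "c + d \<in> {c..c+d}" by auto
    then have c1: "c \<in> N W W" and c2: "c + d \<in> N W W" using c by blast+
    have h2: "c + (b2 - a2) \<in> N U2 V2" by (rule shift_hit[OF that(3,4) c1])
    have h1: "c + d + (b1 - a1) \<in> N U1 V1" by (rule shift_hit[OF that(1,2) c2])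
    have e: "c + d + (b1 - a1) = c + (b2 - a2)" using that(5) unfolding d_def by simp
    from h1 have "c + (b2 - a2) \<in> N U1 V1" unfolding e .
    then have "c + (b2 - a2) \<in> N U1 V1 \<inter> N U2 V2" using h2 by blast
    then show ?thesis by blast
  qed
  show "N U1 V1 \<inter> N U2 V2 \<noteq> {}"
  proof (cases "b1 - a1 \<le> b2 - a2")
    case True
    show ?thesis by (rule key[OF W1 ab1(3) W2 ab2(3) True])
  next
    case False
    then have "b2 - a2 \<le> b1 - a1" by simp
    from key[OF W2 ab2(3) W1 ab1(3) this] show ?thesis by blast
  qed
qed

lemma PT_FB: "PTpt x \<Longrightarrow> FB"
  using WM_Finf_FB PT_WM PT_Finf by blast

lemma WM_thick:
  assumes W: WMbox and UV: "opn U" "opn V"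
  shows "N U V \<in> thick_sets"
  unfolding thick_sets_def
proof (intro CollectI conjI allI)
  show "N U V \<subseteq> {1..}" by (rule hit_times_pos)
  fix n :: nat
  have S: "f ` X = X" using surj WM_trans[OF W] by blast
  define Vs where "Vs = (\<lambda>l. X \<inter> (f^^l) -` V)"
  have A: "\<forall>l\<in>{..n}. opn ((\<lambda>_. U) l) \<and> opn (Vs l)" using UV pre_opn[OF S] unfolding Vs_def by blast
  have "{..n} \<noteq> {}" by auto
  then obtain U' V' where U': "opn U'" "opn V'" "N U' V' \<subseteq> (\<Inter>l\<in>{..n}. N U (Vs l))"
    using fur_fin[OF W finite_atMost _ A] by blast
  obtain a where a: "a \<in> N U' V'" using WM_trans[OF W U'(1,2)] by blast
  have "{a..a+n} \<subseteq> N U V"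
  proof
    fix t assume t: "t \<in> {a..a+n}"
    define l where "l = t - a"
    have l: "l \<in> {..n}" "t = a + l" using t unfolding l_def by auto
    have "a \<in> N U (Vs l)" using a U'(3) l(1) by blast
    then obtain x where x: "a \<ge> 1" "x \<in> U" "x \<in> X" "(f^^a) x \<in> Vs l" unfolding hit_iff by blast
    then have "(f^^l) ((f^^a) x) \<in> V" unfolding Vs_def by simp
    then have "(f^^(a + l)) x \<in> V" by (simp add: fcomm add.commute)
    then show "t \<in> N U V" using x l(2) unfolding hit_iff by auto
  qed
  then show "\<exists>a. {a..a+n} \<subseteq> N U V" by blast
qed

definition "G B cs = {x\<in>X. \<exists>bs::nat\<Rightarrow>nat. \<forall>j<length cs. bs j \<ge> 1 \<and> (f^^(bs j)) x \<in> B \<and> (f^^(bs j + cs!j)) x \<in> B}"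

lemma G_open:
  assumes B: "openin (top_of_set X) B"
  shows "openin (top_of_set X) (G B cs)"
  unfolding openin_subopen[of _ "G B cs"]
proof
  fix x assume "x \<in> G B cs"
  then obtain bs where x: "x \<in> X" "\<forall>j<length cs. bs j \<ge> 1 \<and> (f^^(bs j)) x \<in> B \<and> (f^^(bs j + cs!j)) x \<in> B"
    unfolding G_def by blast
  define S where "S = (\<lambda>j. (X \<inter> (f^^(bs j)) -` B) \<inter> (X \<inter> (f^^(bs j + cs!j)) -` B))"
  define T where "T = X \<inter> \<Inter>(S ` {..<length cs})"
  have "\<forall>j\<in>{..<length cs}. openin (top_of_set X) (S j)"
    unfolding S_def using B pre_open by blast
  then have "openin (top_of_set X) T" unfolding T_def by (intro openin_fin_Inter) auto
  moreover have "x \<in> T" using x unfolding T_def S_def by auto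
  moreover have "T \<subseteq> G B cs"
  proof
    fix y assume "y \<in> T"
    then have "y \<in> X" "\<forall>j<length cs. bs j \<ge> 1 \<and> (f^^(bs j)) y \<in> B \<and> (f^^(bs j + cs!j)) y \<in> B"
      using x(2) unfolding T_def S_def by auto
    then show "y \<in> G B cs" unfolding G_def by blast
  qed
  ultimately show "\<exists>T. openin (top_of_set X) T \<and> x \<in> T \<and> T \<subseteq> G B cs" by blast
qed

lemma seq_hit:
  assumes W: WMbox and Q: "opn Q" and Gs: "\<forall>j<L. opn (Gs j)"
  shows "\<exists>Q1. opn Q1 \<and> Q1 \<subseteq> Q \<and> (\<exists>bs::nat\<Rightarrow>nat. \<forall>j<L. bs j \<ge> 1 \<and> (\<forall>y\<in>Q1. (f^^(bs j)) y \<in> Gs j))"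
  using Gs
proof (induction L)
  case 0
  show ?case using Q by blast
next
  case (Suc L)
  then obtain Q1 bs where Q1: "opn Q1" "Q1 \<subseteq> Q" "\<forall>j<L. bs j \<ge> 1 \<and> (\<forall>y\<in>Q1. (f^^(bs j)) y \<in> Gs j)"
    by auto
  have "opn (Gs L)" using Suc.prems by simp
  then obtain b where b: "b \<in> N Q1 (Gs L)" using WM_trans[OF W Q1(1)] by blast
  then have b1: "b \<ge> 1" and "\<exists>y\<in>Q1 \<inter> X. (f^^b) y \<in> Gs L" unfolding hit_iff by auto
  define Q2 where "Q2 = Q1 \<inter> (X \<inter> (f^^b) -` Gs L)"
  have "Q2 \<noteq> {}" using \<open>\<exists>y\<in>Q1 \<inter> X. (f^^b) y \<in> Gs L\<close> unfolding Q2_def by blast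
  moreover have "openin (top_of_set X) Q2" unfolding Q2_def using Q1(1) \<open>opn (Gs L)\<close> pre_open by blast
  moreover have "Q2 \<subseteq> Q" using Q1(2) unfolding Q2_def by blast
  moreover have "\<forall>j<Suc L. (bs(L := b)) j \<ge> 1 \<and> (\<forall>y\<in>Q2. (f^^((bs(L := b)) j)) y \<in> Gs j)"
  proof (intro allI impI)
    fix j assume j: "j < Suc L"
    show "(bs(L := b)) j \<ge> 1 \<and> (\<forall>y\<in>Q2. (f^^((bs(L := b)) j)) y \<in> Gs j)"
    proof (cases "j = L")
      case True
      then show ?thesis using b1 unfolding Q2_def by simp
    next
      case False
      then have "j < L" using j by simp
      then show ?thesis using Q1(3) False unfolding Q2_def by simp
    qed
  qed
  ultimately show ?case by blast
qed

lemma G_dense: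
  assumes W: WMbox and B: "opn B" and cs: "\<forall>j<length cs. cs!j \<in> N B B" and Q: "opn Q"
  shows "G B cs \<inter> Q \<noteq> {}"
proof -
  define Gs where "Gs = (\<lambda>j. B \<inter> (X \<inter> (f^^(cs!j)) -` B))"
  have "\<forall>j<length cs. opn (Gs j)"
  proof (intro allI impI conjI)
    fix j assume j: "j < length cs"
    show "openin (top_of_set X) (Gs j)" unfolding Gs_def using B pre_open by blast
    have "cs!j \<in> N B B" using cs j by blast
    then obtain z where "z \<in> B" "z \<in> X" "(f^^(cs!j)) z \<in> B" unfolding hit_iff by blast
    then have "z \<in> Gs j" unfolding Gs_def by blast
    then show "Gs j \<noteq> {}" by blast
  qed
  then obtain Q1 bs where Q1: "opn Q1" "Q1 \<subseteq> Q" "\<forall>j<length cs. bs j \<ge> 1 \<and> (\<forall>y\<in>Q1. (f^^(bs j)) y \<in> Gs j)"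
    using seq_hit[OF W Q, of "length cs" Gs] by auto
  obtain y where y: "y \<in> Q1" using Q1(1) by blast
  have yX: "y \<in> X" using y Q1(1) opn_sub by blast
  have "\<forall>j<length cs. bs j \<ge> 1 \<and> (f^^(bs j)) y \<in> B \<and> (f^^(bs j + cs!j)) y \<in> B"
  proof (intro allI impI conjI)
    fix j assume j: "j < length cs"
    have h: "(f^^(bs j)) y \<in> Gs j" using Q1(3) y j by blast
    show "bs j \<ge> 1" using Q1(3) j by blast
    show "(f^^(bs j)) y \<in> B" using h unfolding Gs_def by blast
    have "(f^^(cs!j)) ((f^^(bs j)) y) \<in> B" using h unfolding Gs_def by blast
    then show "(f^^(bs j + cs!j)) y \<in> B" by (simp add: fcomm add.commute)
  qed
  then have "y \<in> G B cs" using yX unfolding G_def by blast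
  then show ?thesis using y Q1(2) by blast
qed

lemma G_mem:
  assumes "x \<in> G B cs" "j < length cs" "cs!j \<ge> 1"
  shows "cs!j \<in> diff_set (vis x B)"
proof -
  obtain bs where bs: "\<forall>j<length cs. bs j \<ge> 1 \<and> (f^^(bs j)) x \<in> B \<and> (f^^(bs j + cs!j)) x \<in> B"
    using assms(1) unfolding G_def by blast
  have "bs j \<in> vis x B" "bs j + cs!j \<in> vis x B" using bs assms(2) unfolding vis_iff by auto
  moreover have "cs!j = (bs j + cs!j) - bs j" "bs j + cs!j > bs j" using assms(3) by auto
  ultimately show ?thesis unfolding diff_iff by blast
qed

lemma FB_PT:
  assumes F: FB
  shows "\<exists>x. PTpt x"
proof -
  have W: WMbox using FB_WM[OF F] .
  obtain \<B> where B: "countable \<B>" "\<forall>B\<in>\<B>. opn B" "\<forall>U. opn U \<longrightarrow> (\<exists>B\<in>\<B>. B \<subseteq> U)"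
    using countable_base[OF cpt] by blast
  define \<G> where "\<G> = {G B cs | B cs. B \<in> \<B> \<and> (\<forall>j<length cs. cs!j \<in> N B B)}"
  have "\<G> \<subseteq> (\<lambda>(B, cs). G B cs) ` (\<B> \<times> UNIV)" unfolding \<G>_def by auto
  moreover have "countable (\<B> \<times> (UNIV :: nat list set))" using B(1) by simp
  ultimately have cG: "countable \<G>" by (meson countable_image countable_subset)
  have dG: "\<forall>T\<in>\<G>. openin (top_of_set X) T \<and> (\<forall>U. openin (top_of_set X) U \<and> U \<noteq> {} \<longrightarrow> T \<inter> U \<noteq> {})"
  proof
    fix T assume "T \<in> \<G>"
    then obtain B' cs where T: "T = G B' cs" "B' \<in> \<B>" "\<forall>j<length cs. cs!j \<in> N B' B'" unfolding \<G>_def by blast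
    have "opn B'" using B(2) T(2) by blast
    then show "openin (top_of_set X) T \<and> (\<forall>U. openin (top_of_set X) U \<and> U \<noteq> {} \<longrightarrow> T \<inter> U \<noteq> {})"
      using G_open G_dense[OF W _ T(3)] T(1) by blast
  qed
  obtain x where x: "x \<in> X" "\<forall>T\<in>\<G>. x \<in> T" using baire_X[OF cpt ne cG dG] by blast
  have "\<forall>U. opn U \<longrightarrow> vis x U \<in> F_smt"
  proof (intro allI impI)
    fix U assume U: "opn U"
    obtain B' where B': "B' \<in> \<B>" "B' \<subseteq> U" using B(3) U by blast
    have oB: "opn B'" using B(2) B'(1) by blast
    have inG: "x \<in> G B' cs" if "\<forall>j<length cs. cs!j \<in> N B' B'" for cs
      using x(2) B'(1) that unfolding \<G>_def by blast
    have NF: "N B' B' \<in> F_infty" using FB_Finf[OF F oB oB] .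
    have NT: "N B' B' \<in> thick_sets" using WM_thick[OF W oB oB] .
    have D1: "diff_set (vis x B') \<in> F_infty" unfolding Finf_iff
    proof (intro conjI allI impI)
      show "diff_set (vis x B') \<subseteq> {1..}" by (rule diff_pos)
      fix i :: nat and ns :: "nat list" assume i: "i \<ge> 1" "length ns = i"
      then obtain k where k: "k \<ge> 1" "\<forall>j<i. k*(j+1) + ns!j \<in> N B' B'" using NF unfolding Finf_iff by blast
      define cs where "cs = map (\<lambda>j. k*(j+1) + ns!j) [0..<i]"
      have "\<forall>j<length cs. cs!j \<in> N B' B'" using k(2) unfolding cs_def by simp
      then have xG: "x \<in> G B' cs" by (rule inG)
      have "\<forall>j<i. k*(j+1) + ns!j \<in> diff_set (vis x B')"
      proof (intro allI impI)
        fix j assume j: "j < i"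
        have "cs!j \<in> diff_set (vis x B')" using G_mem[OF xG] j k(1) unfolding cs_def by simp
        then show "k*(j+1) + ns!j \<in> diff_set (vis x B')" using j unfolding cs_def by simp
      qed
      then show "\<exists>k\<ge>1. \<forall>j<i. k*(j+1) + ns!j \<in> diff_set (vis x B')" using k(1) by blast
    qed
    have D2: "diff_set (vis x B') \<in> thick_sets" unfolding thick_sets_def
    proof (intro CollectI conjI allI)
      show "diff_set (vis x B') \<subseteq> {1..}" by (rule diff_pos)
      fix n :: nat
      obtain a where a: "{a..a+n} \<subseteq> N B' B'" using NT unfolding thick_sets_def by blast
      have a1: "a \<ge> 1" using a hit_times_pos by fastforce
      define cs where "cs = map (\<lambda>l. a + l) [0..<Suc n]"
      have lc: "length cs = Suc n" unfolding cs_def by simp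
      have cn: "cs!j = a + j" if "j < Suc n" for j
        using that unfolding cs_def by (simp del: upt_Suc)
      have "\<forall>j<length cs. cs!j \<in> N B' B'"
      proof (intro allI impI)
        fix j assume "j < length cs"
        then have "j < Suc n" using lc by simp
        then have "a + j \<in> {a..a+n}" by simp
        then show "cs!j \<in> N B' B'" using a cn \<open>j < Suc n\<close> by auto
      qed
      then have xG: "x \<in> G B' cs" by (rule inG)
      have "{a..a+n} \<subseteq> diff_set (vis x B')"
      proof
        fix t assume t: "t \<in> {a..a+n}"
        then have j: "t - a < length cs" using lc by auto
        have "cs!(t-a) = t" using t cn[of "t-a"] by auto
        moreover have "cs!(t-a) \<ge> 1" using a1 t calculation by auto
        ultimately show "t \<in> diff_set (vis x B')" using G_mem[OF xG j] by simp
      qed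
      then show "\<exists>a. {a..a+n} \<subseteq> diff_set (vis x B')" by blast
    qed
    have sub: "diff_set (vis x B') \<subseteq> diff_set (vis x U)"
      by (rule diff_mono) (use B'(2) in \<open>auto simp: visit_times_def\<close>)
    have "diff_set (vis x U) \<in> F_infty" by (rule Finf_up[OF D1 sub diff_pos])
    moreover have "diff_set (vis x U) \<in> thick_sets" by (rule thick_up[OF D2 sub diff_pos])
    moreover have "vis x U \<subseteq> {1..}" unfolding visit_times_def by auto
    ultimately show "vis x U \<in> F_smt" unfolding F_smt_def nabla_def by blast
  qed
  then show ?thesis using x(1) unfolding PTpt_def by blast
qed

theorem eq3: "F_mixing F_infty (top_of_set X) f \<longleftrightarrow> F_point_transitive F_smt (top_of_set X) f"
proof
  assume "F_mixing F_infty (top_of_set X) f"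
  then have FB using fmix_lemma by blast
  then obtain x where "PTpt x" using FB_PT by blast
  then show "F_point_transitive F_smt (top_of_set X) f"
    unfolding PTpt_def F_point_transitive_def by auto
next
  assume "F_point_transitive F_smt (top_of_set X) f"
  then obtain x where "PTpt x" unfolding PTpt_def F_point_transitive_def by auto
  then have FB by (rule PT_FB)
  then show "F_mixing F_infty (top_of_set X) f" using fmix_lemma by blast
qed

end

theorem theorem4p10:
  fixes X :: "'a :: metric_space set" and f :: "'a \<Rightarrow> 'a"
  assumes "compact X" and "X \<noteq> {}" and "continuous_on X f" and "f ` X \<subseteq> X"
  shows "(strongly_multi_transitive (top_of_set X) f
            \<longleftrightarrow> weakly_mixing (top_of_set X) f \<and> multi_transitive (top_of_set X) f)
       \<and> (weakly_mixing (top_of_set X) f \<and> multi_transitive (top_of_set X) f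
            \<longleftrightarrow> F_mixing F_infty (top_of_set X) f)
       \<and> (F_mixing F_infty (top_of_set X) f
            \<longleftrightarrow> F_point_transitive F_smt (top_of_set X) f)"
proof -
  interpret dsys X f by (rule dsys.intro[OF assms])
  show ?thesis using eq1 eq2 eq3 by blast
qed

end
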